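(* Let $d\ge 2$ and $N\ge 1$ be integers and consider the infinite-temperature limit $\beta=0$, so that the thermal distribution of the system is uniform and the joint thermal distribution $\Gamma$ of system and memory is uniform on $\{1,\dots,dN\}$. Let $\mathbf p=(p_1,\dots,p_d)$ be a probability vector, let $i\neq j$ be two levels of the system, and let $\mathcal P^{(ij)}$ be the memory-assisted protocol defined in the context. Then $$\mathcal P^{(ij)}(\mathbf p\otimes\boldsymbol\eta_M)=\mathbf q\otimes\boldsymbol\eta_M,\qquad \mathbf q=\big(\Pi_{ij}+\epsilon(\mathbb 1-\Pi_{ij})\big)\mathbf p,$$ where $\Pi_{ij}$ is the $d\times d$ permutation matrix transposing entries $i$ and $j$, $\mathbb 1$ is the identity, and $\epsilon$ (which depends only on $N$) satisfies $$\epsilon=(\pi N)^{-1/2}+o\big(N^{-1/2}\big)\xrightarrow{N\to\infty}0 .$$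
   Context: Setting: a $d$-level system with energies $E_1,\dots,E_d$ and thermal (Gibbs) distribution $\gamma_a=e^{-\beta E_a}/\sum_b e^{-\beta E_b}$; an $N$-dimensional memory with trivial Hamiltonian, whose thermal state is the uniform distribution $\boldsymbol\eta_M=(1/N,\dots,1/N)$. Joint (energy-incoherent) states are probability vectors $\mathbf Q$ of length $dN$, where the entry with index $(a-1)N+k$ corresponds to system level $a\in\{1,\dots,d\}$ and memory level $k\in\{1,\dots,N\}$; $\mathbf p\otimes\boldsymbol\eta_M$ has entries $p_a/N$ and the joint thermal distribution is $\Gamma=\boldsymbol\gamma\otimes\boldsymbol\eta_M$, i.e. $\Gamma_{(a-1)N+k}=\gamma_a/N$. Two-level thermalisation $T_{xy}$ ($x\neq y$ joint indices): it maps $Q_x\mapsto (Q_x+Q_y)\Gamma_x/(\Gamma_x+\Gamma_y)$, $Q_y\mapsto (Q_x+Q_y)\Gamma_y/(\Gamma_x+\Gamma_y)$ and leaves all other entries unchanged. Round $\mathcal R^{(ij)}_k$ ($k=1,\dots,N$): apply sequentially, for $l=1,2,\dots,N$ in this order, the thermalisations $T_{(j-1)N+k,\,(i-1)N+l}$ (i.e. the $k$-th entry of the block of level $j$ is thermalised successively with every entry of the block of level $i$). Truncated protocol: $\widetilde{\mathcal P}^{(ij)}=\mathcal R^{(ij)}_N\circ\cdots\circ\mathcal R^{(ij)}_1$. Full thermalisation of the memory: $\mathcal T(\mathbf Q)=\mathbf q\otimes\boldsymbol\eta_M$ with $q_a=\sum_{k=1}^N Q_{(a-1)N+k}$. Protocol: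 $\mathcal P^{(ij)}=\mathcal T\circ\widetilde{\mathcal P}^{(ij)}$. *)

theory Defs
  imports Complex_Main "HOL-Library.Landau_Symbols"
begin

text \<open>Vectors are functions nat => real with 1-based indices.
 System levels a in {1..d}; joint index (a-1)*N + k with k in {1..N}.\<close>

definition gibbs :: "real \<Rightarrow> (nat \<Rightarrow> real) \<Rightarrow> nat \<Rightarrow> nat \<Rightarrow> real" where
  "gibbs \<beta> E d a = exp (- \<beta> * E a) / (\<Sum>b=1..d. exp (- \<beta> * E b))"

text \<open>Product p \<otimes> eta_M with the uniform memory state (zero outside {1..d*N}).\<close>
definition tensor_unif :: "nat \<Rightarrow> nat \<Rightarrow> (nat \<Rightarrow> real) \<Rightarrow> nat \<Rightarrow> real" where
  "tensor_unif d N p x = (if 1 \<le> x \<and> x \<le> d * N then p ((x - 1) div N + 1) / real N else 0)"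

definition joint_gibbs :: "real \<Rightarrow> (nat \<Rightarrow> real) \<Rightarrow> nat \<Rightarrow> nat \<Rightarrow> nat \<Rightarrow> real" where
  "joint_gibbs \<beta> E d N = tensor_unif d N (gibbs \<beta> E d)"

definition therm2 :: "(nat \<Rightarrow> real) \<Rightarrow> nat \<Rightarrow> nat \<Rightarrow> (nat \<Rightarrow> real) \<Rightarrow> nat \<Rightarrow> real" where
  "therm2 \<Gamma> x y Q = (\<lambda>z. if z = x then (Q x + Q y) * \<Gamma> x / (\<Gamma> x + \<Gamma> y)
                          else if z = y then (Q x + Q y) * \<Gamma> y / (\<Gamma> x + \<Gamma> y)
                          else Q z)"

definition round_ij :: "(nat \<Rightarrow> real) \<Rightarrow> nat \<Rightarrow> nat \<Rightarrow> nat \<Rightarrow> nat \<Rightarrow> (nat \<Rightarrow> real) \<Rightarrow> nat \<Rightarrow> real" where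
  "round_ij \<Gamma> N i j k Q =
     foldl (\<lambda>R l. therm2 \<Gamma> ((j - 1) * N + k) ((i - 1) * N + l) R) Q [1..<N+1]"

definition trunc_protocol :: "(nat \<Rightarrow> real) \<Rightarrow> nat \<Rightarrow> nat \<Rightarrow> nat \<Rightarrow> (nat \<Rightarrow> real) \<Rightarrow> nat \<Rightarrow> real" where
  "trunc_protocol \<Gamma> N i j Q = foldl (\<lambda>R k. round_ij \<Gamma> N i j k R) Q [1..<N+1]"

definition marginal :: "nat \<Rightarrow> (nat \<Rightarrow> real) \<Rightarrow> nat \<Rightarrow> real" where
  "marginal N Q a = (\<Sum>k=1..N. Q ((a - 1) * N + k))"

definition mem_therm :: "nat \<Rightarrow> nat \<Rightarrow> (nat \<Rightarrow> real) \<Rightarrow> nat \<Rightarrow> real" where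
  "mem_therm d N Q = tensor_unif d N (marginal N Q)"

definition protocol :: "(nat \<Rightarrow> real) \<Rightarrow> nat \<Rightarrow> nat \<Rightarrow> nat \<Rightarrow> nat \<Rightarrow> (nat \<Rightarrow> real) \<Rightarrow> nat \<Rightarrow> real" where
  "protocol \<Gamma> d N i j Q = mem_therm d N (trunc_protocol \<Gamma> N i j Q)"

definition swap_vec :: "nat \<Rightarrow> nat \<Rightarrow> (nat \<Rightarrow> real) \<Rightarrow> nat \<Rightarrow> real" where
  "swap_vec i j p = (\<lambda>a. p (if a = i then j else if a = j then i else a))"

definition prob_vec :: "nat \<Rightarrow> (nat \<Rightarrow> real) \<Rightarrow> bool" where
  "prob_vec d p \<longleftrightarrow> (\<forall>a\<in>{1..d}. p a \<ge> 0) \<and> (\<Sum>a=1..d. p a) = 1"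

end

theory Submission
  imports Defs "HOL-Analysis.Analysis"
begin


fun ff :: "nat \<Rightarrow> nat \<Rightarrow> real" where
  "ff k 0 = 0"
| "ff 0 (Suc l) = 1"
| "ff (Suc k) (Suc l) = (ff (Suc k) l + ff k (Suc l)) / 2"

lemma ff_sym: "0 < k \<or> 0 < l \<Longrightarrow> ff k l + ff l k = 1"
proof (induction k l rule: ff.induct)
  case (1 k) then show ?case by (cases k) auto
next
  case (2 l) then show ?case by simp
next
  case (3 k l)
  have a: "ff (Suc k) l + ff l (Suc k) = 1" using 3 by simp
  have b: "ff k (Suc l) + ff (Suc l) k = 1" using 3 by simp
  show ?case unfolding ff.simps(3) using a b by (simp add: field_simps)
qed

lemma ff_diag: "n > 0 \<Longrightarrow> ff n n = 1/2"
  using ff_sym[of n n] by simp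

lemma ff_1: "ff (Suc 0) l = 1 - 1 / 2^l"
  by (induction l) (auto simp: field_simps)

definition DD :: "nat \<Rightarrow> nat \<Rightarrow> real" where
  "DD k l = ff k l - ff (Suc k) l"

lemma DD_rec: "DD (Suc k) (Suc l) = (DD (Suc k) l + DD k (Suc l)) / 2"
proof -
  have e1: "ff (Suc k) (Suc l) = (ff (Suc k) l + ff k (Suc l)) / 2" by (rule ff.simps(3))
  have e2: "ff (Suc (Suc k)) (Suc l) = (ff (Suc (Suc k)) l + ff (Suc k) (Suc l)) / 2" by (rule ff.simps(3))
  show ?thesis unfolding DD_def using e1 e2 by (simp add: field_simps)
qed

lemma DD_0: "DD k 0 = 0" unfolding DD_def by simp

lemma DD_closed: "0 < k \<or> 0 < l \<Longrightarrow> DD k l = real (k + l - 1 choose k) / 2^(k+l)"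
proof (induction k arbitrary: l)
  case 0
  then obtain l' where "l = Suc l'" by (cases l) auto
  then show ?case by (simp add: DD_def ff_1 field_simps)
next
  case (Suc k)
  note outer = Suc.IH
  show ?case
  proof (induction l)
    case 0
    then show ?case by (simp add: DD_0)
  next
    case (Suc l)
    have e1: "DD (Suc k) l = real (k + l choose Suc k) / 2^(Suc k + l)"
      using Suc.IH by simp
    have e2: "DD k (Suc l) = real (k + l choose k) / 2^(k + Suc l)"
      using outer[of "Suc l"] by simp
    show ?case unfolding DD_rec e1 e2
      by (simp add: field_simps)
  qed
qed

definition cc :: "nat \<Rightarrow> real" where
  "cc n = real ((2*n) choose n) / 4^n"

lemma central_split: "(2 * Suc n choose Suc n) = 2 * (Suc (2*n) choose Suc n)"
proof -
  have s: "(Suc (2*n) choose Suc n) = (Suc (2*n) choose n)"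
    using binomial_symmetric[of n "Suc (2*n)"] by (simp add: Suc_diff_le del: binomial_Suc_Suc)
  have e: "2 * Suc n = Suc (Suc (2*n))" by simp
  have "(2 * Suc n choose Suc n) = (Suc (2*n) choose n) + (Suc (2*n) choose Suc n)"
    unfolding e by (rule binomial_Suc_Suc)
  then show ?thesis using s by linarith
qed

lemma cc_Suc: "real (Suc n) * cc (Suc n) = cc n * (2 * real n + 1) / 2"
proof -
  have h2: "Suc n * (Suc (2*n) choose Suc n) = Suc (2*n) * ((2*n) choose n)"
    by (rule Suc_times_binomial)
  have r1: "real (2 * Suc n choose Suc n) = 2 * real (Suc (2*n) choose Suc n)"
    unfolding central_split by (simp only: of_nat_mult of_nat_numeral)
  have r2: "real (Suc n) * real (Suc (2*n) choose Suc n) = (2 * real n + 1) * real ((2*n) choose n)"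
  proof -
    have "real (Suc n) * real (Suc (2*n) choose Suc n) = real (Suc (2*n)) * real ((2*n) choose n)"
      by (simp only: of_nat_mult[symmetric] h2)
    then show ?thesis by simp
  qed
  have "real (Suc n) * cc (Suc n) = 2 * (real (Suc n) * real (Suc (2*n) choose Suc n)) / (4 * 4^n)"
    unfolding cc_def r1 by (simp only: power_Suc mult_ac times_divide_eq_right)
  also have "\<dots> = cc n * (2 * real n + 1) / 2"
    unfolding r2 cc_def by (simp add: field_simps del: binomial_Suc_Suc)
  finally show ?thesis .
qed

lemma DD_diag1: "DD n (Suc n) = cc n / 2"
proof -
  have e: "(2::real)^(2*n) = 4^n" by (simp only: power_mult) simp
  have p: "(2::real)^(n + Suc n) = 2 * 4^n"
  proof -
    have "n + Suc n = Suc (2*n)" by simp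
    then have "(2::real)^(n + Suc n) = 2 * 2^(2*n)" by (simp only: power_Suc)
    then show ?thesis by (simp only: e)
  qed
  have q: "n + Suc n - 1 = 2*n" by simp
  have "DD n (Suc n) = real (n + Suc n - 1 choose n) / 2^(n+Suc n)"
    by (rule DD_closed) simp
  also have "\<dots> = real ((2*n) choose n) / (2 * 4^n)" by (simp only: p q)
  also have "\<dots> = cc n / 2" unfolding cc_def by simp
  finally show ?thesis .
qed

lemma DD_diag2: "DD (Suc n) (Suc n) = cc (Suc n) / 2"
proof -
  have e: "(2::real)^(2 * Suc n) = 4^Suc n" by (simp only: power_mult) simp
  have p: "(2::real)^(Suc n + Suc n) = 4 ^ Suc n"
  proof -
    have "Suc n + Suc n = 2 * Suc n" by simp
    then show ?thesis by (simp only: e)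
  qed
  have q: "Suc n + Suc n - 1 = Suc (2*n)" by simp
  have r1: "real (2 * Suc n choose Suc n) = 2 * real (Suc (2*n) choose Suc n)"
    unfolding central_split by (simp only: of_nat_mult of_nat_numeral)
  have "DD (Suc n) (Suc n) = real (Suc n + Suc n - 1 choose Suc n) / 2^(Suc n + Suc n)"
    by (rule DD_closed) simp
  also have "\<dots> = real (Suc (2*n) choose Suc n) / 4 ^ Suc n" by (simp only: p q)
  also have "\<dots> = cc (Suc n) / 2" unfolding cc_def r1 by (simp del: binomial_Suc_Suc)
  finally show ?thesis .
qed

definition AA :: "nat \<Rightarrow> real" where "AA N = (\<Sum>l<N. DD N (Suc l))"
definition SS :: "nat \<Rightarrow> real" where "SS N = (\<Sum>l<N. ff N (Suc l))"

lemma AA_Suc: "AA (Suc N) = AA N + DD N (Suc N) - DD (Suc N) (Suc N)"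
proof -
  have "AA (Suc N) = (\<Sum>l<Suc N. (DD (Suc N) l + DD N (Suc l)) / 2)"
    unfolding AA_def by (simp add: DD_rec)
  also have "\<dots> = ((\<Sum>l<Suc N. DD (Suc N) l) + (\<Sum>l<Suc N. DD N (Suc l))) / 2"
    by (simp only: sum.distrib flip: sum_divide_distrib)
  also have "(\<Sum>l<Suc N. DD (Suc N) l) = AA (Suc N) - DD (Suc N) (Suc N)"
  proof -
    have "(\<Sum>l<Suc N. DD (Suc N) l) = DD (Suc N) 0 + (\<Sum>l<N. DD (Suc N) (Suc l))"
      by (rule sum.lessThan_Suc_shift)
    moreover have "AA (Suc N) = (\<Sum>l<N. DD (Suc N) (Suc l)) + DD (Suc N) (Suc N)"
      unfolding AA_def by (rule sum.lessThan_Suc)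
    ultimately show ?thesis by (simp add: DD_0)
  qed
  also have "(\<Sum>l<Suc N. DD N (Suc l)) = AA N + DD N (Suc N)"
    unfolding AA_def by simp
  finally show ?thesis by simp
qed

lemma AA_closed: "AA N = (1 - cc N) / 2"
proof (induction N)
  case 0 then show ?case by (simp add: AA_def cc_def)
next
  case (Suc N)
  have "AA (Suc N) = (1 - cc N) / 2 + cc N / 2 - cc (Suc N) / 2"
    by (simp only: AA_Suc DD_diag1 DD_diag2 Suc.IH)
  then show ?case by (simp add: diff_divide_distrib)
qed

lemma SS_Suc: "SS (Suc N) = SS N - AA N + 1/2"
proof -
  have "SS (Suc N) = (\<Sum>l<N. ff (Suc N) (Suc l)) + ff (Suc N) (Suc N)"
    unfolding SS_def by (rule sum.lessThan_Suc)
  also have "(\<Sum>l<N. ff (Suc N) (Suc l)) = (\<Sum>l<N. ff N (Suc l) - DD N (Suc l))"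
    by (simp add: DD_def del: ff.simps)
  finally show ?thesis unfolding SS_def AA_def by (simp add: sum_subtractf ff_diag del: ff.simps)
qed

lemma SS_closed: "SS N = real N * cc N"
proof (induction N)
  case 0 then show ?case by (simp add: SS_def)
next
  case (Suc N)
  have "SS (Suc N) = real N * cc N - (1 - cc N) / 2 + 1/2"
    by (simp only: SS_Suc AA_closed Suc.IH)
  also have "\<dots> = cc N * (2 * real N + 1) / 2" by (simp add: field_simps)
  also have "\<dots> = real (Suc N) * cc (Suc N)" by (rule cc_Suc[symmetric])
  finally show ?case .
qed



lemma cc_gchoose: "cc n = (-1)^n * ((-1/2::real) gchoose n)"
proof (induction n)
  case 0 then show ?case by (simp add: cc_def)
next
  case (Suc n)
  have g: "((-1/2::real) gchoose Suc n) = ((-1/2::real) gchoose n) * (-1/2 - real n) / real (Suc n)"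
  proof -
    have "fact (Suc n) * ((-1/2::real) gchoose Suc n) = (\<Prod>i = 0..<Suc n. (-1/2::real) - of_nat i)"
      by (rule gbinomial_mult_fact)
    also have "\<dots> = (\<Prod>i = 0..<n. (-1/2::real) - of_nat i) * (-1/2 - real n)"
      by simp
    also have "(\<Prod>i = 0..<n. (-1/2::real) - of_nat i) = fact n * ((-1/2::real) gchoose n)"
      by (rule gbinomial_mult_fact[symmetric])
    finally have "fact (Suc n) * ((-1/2::real) gchoose Suc n) = fact n * ((-1/2::real) gchoose n) * (-1/2 - real n)" .
    then have "fact n * (real (Suc n) * ((-1/2::real) gchoose Suc n)) = fact n * (((-1/2::real) gchoose n) * (-1/2 - real n))"
      by (simp only: fact_Suc of_nat_Suc mult_ac)
    then have "real (Suc n) * ((-1/2::real) gchoose Suc n) = ((-1/2::real) gchoose n) * (-1/2 - real n)"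
      using fact_nonzero[of n] by (metis mult_left_cancel)
    moreover have "\<And>(a::real) b m. m > 0 \<Longrightarrow> m * a = b \<Longrightarrow> a = b / m" by (simp add: field_simps)
    ultimately show ?thesis by (metis of_nat_0_less_iff zero_less_Suc)
  qed
  have A: "cc (Suc n) = cc n * (2 * real n + 1) / 2 / real (Suc n)"
    using cc_Suc[of n] by (simp add: field_simps)
  have aux: "\<And>(c::real) s g x m. c = s * g \<Longrightarrow> m > 0 \<Longrightarrow> c * (2*x+1)/2/m = - s * (g * (-1/2 - x) / m)"
    by (simp add: field_simps)
  have "cc (Suc n) = - ((-1)^n) * (((-1/2::real) gchoose n) * (-1/2 - real n) / real (Suc n))"
    unfolding A by (rule aux[OF Suc.IH]) simp
  also have "\<dots> = - ((-1)^n) * ((-1/2::real) gchoose Suc n)" by (simp only: g)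
  also have "\<dots> = (-1)^Suc n * ((-1/2::real) gchoose Suc n)" by (simp only: power_Suc)
  finally show ?case .
qed

lemma sign_aux: "(G::real) / ((-1)^n / S) = ((-1)^n * G) * S"
  by (cases "even n") simp_all

lemma cc_lim: "(\<lambda>n. cc n * sqrt (real n)) \<longlonglongrightarrow> 1 / sqrt pi"
proof -
  have L: "(\<lambda>n. ((-1/2::real) gchoose n) / ((-1)^n / exp ((-1/2 + 1) * of_real (ln (real n)))))
           \<longlonglongrightarrow> inverse (Gamma (- (-1/2::real)))"
    by (rule gbinomial_asymptotic)
  have G: "inverse (Gamma (- (-1/2::real))) = 1 / sqrt pi"
  proof -
    have "- (-1/2::real) = 1/2" by simp
    then show ?thesis by (simp only: Gamma_one_half_real inverse_eq_divide)
  qed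
  have ev: "eventually (\<lambda>n. ((-1/2::real) gchoose n) / ((-1)^n / exp ((-1/2 + 1) * of_real (ln (real n))))
             = cc n * sqrt (real n)) sequentially"
    using eventually_gt_at_top[of "0::nat"]
  proof eventually_elim
    fix n :: nat assume n: "n > 0"
    have s: "exp ((-1/2 + 1) * of_real (ln (real n))) = sqrt (real n)"
    proof -
      have "sqrt (real n) = real n powr (1/2)" by (simp add: powr_half_sqrt)
      also have "\<dots> = exp ((-1/2 + 1) * ln (real n))" using n by (simp add: powr_def)
      finally show ?thesis by simp
    qed
    show "((-1/2::real) gchoose n) / ((-1)^n / exp ((-1/2 + 1) * of_real (ln (real n))))
             = cc n * sqrt (real n)"
      unfolding s cc_gchoose by (rule sign_aux)
  qed
  have "(\<lambda>n. cc n * sqrt (real n)) \<longlonglongrightarrow> inverse (Gamma (- (-1/2::real)))"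
    by (rule Lim_transform_eventually[OF L ev])
  then show ?thesis unfolding G .
qed

lemma cc_asymp: "(\<lambda>N. cc N - 1 / sqrt (pi * real N)) \<in> o(\<lambda>N. 1 / sqrt (real N))"
proof (rule smalloI_tendsto)
  have "(\<lambda>n. cc n * sqrt (real n) - 1 / sqrt pi) \<longlonglongrightarrow> 1 / sqrt pi - 1 / sqrt pi"
    by (intro tendsto_intros cc_lim)
  then have L: "(\<lambda>n. cc n * sqrt (real n) - 1 / sqrt pi) \<longlonglongrightarrow> 0" by simp
  have ev: "eventually (\<lambda>n. cc n * sqrt (real n) - 1 / sqrt pi
      = (cc n - 1 / sqrt (pi * real n)) / (1 / sqrt (real n))) sequentially"
    using eventually_gt_at_top[of "0::nat"]
  proof eventually_elim
    fix n :: nat assume n: "n > 0"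
    then show "cc n * sqrt (real n) - 1 / sqrt pi
      = (cc n - 1 / sqrt (pi * real n)) / (1 / sqrt (real n))"
      by (simp add: real_sqrt_mult field_simps)
  qed
  show "((\<lambda>n. (cc n - 1 / sqrt (pi * real n)) / (1 / sqrt (real n))) \<longlongrightarrow> 0) at_top"
    by (rule Lim_transform_eventually[OF L ev])
  show "eventually (\<lambda>n. 1 / sqrt (real n) \<noteq> 0) at_top"
    using eventually_gt_at_top[of "0::nat"] by eventually_elim simp
qed



definition avg :: "nat \<Rightarrow> nat \<Rightarrow> (nat \<Rightarrow> real) \<Rightarrow> nat \<Rightarrow> real" where
  "avg x y Q = Q(x := (Q x + Q y) / 2, y := (Q x + Q y) / 2)"

lemma therm2_avg:
  assumes "\<Gamma> x = \<Gamma> y" "\<Gamma> x > 0" "x \<noteq> y"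
  shows "therm2 \<Gamma> x y Q = avg x y Q"
  using assms unfolding therm2_def avg_def by (auto simp: fun_eq_iff field_simps)

lemma gibbs0: "d > 0 \<Longrightarrow> gibbs 0 E d a = 1 / real d"
  unfolding gibbs_def by simp

definition blk :: "nat \<Rightarrow> nat \<Rightarrow> nat" where "blk N z = (z - 1) div N + 1"
definition pos :: "nat \<Rightarrow> nat \<Rightarrow> nat" where "pos N z = (z - 1) mod N + 1"

lemma idx:
  assumes "1 \<le> m" "m \<le> N" "1 \<le> a"
  shows "blk N ((a - 1) * N + m) = a" "pos N ((a - 1) * N + m) = m"
proof -
  have e: "(a - 1) * N + m - 1 = (a - 1) * N + (m - 1)" using assms by simp
  have lt: "m - 1 < N" using assms by simp
  have N0: "N > 0" using assms by simp
  have d1: "((a - 1) * N + (m - 1)) div N = a - 1" using lt N0 by simp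
  have m1: "((a - 1) * N + (m - 1)) mod N = m - 1" using lt N0 by simp
  show "blk N ((a - 1) * N + m) = a" unfolding blk_def
    by (subst e, subst d1) (use assms(3) in simp)
  show "pos N ((a - 1) * N + m) = m" unfolding pos_def
    by (subst e, subst m1) (use assms(1) in simp)
qed

lemma idx_inr:
  fixes m N a d :: nat
  assumes "1 \<le> m" "m \<le> N" "1 \<le> a" "a \<le> d"
  shows "1 \<le> (a - 1) * N + m" "(a - 1) * N + m \<le> d * N"
proof -
  show "1 \<le> (a - 1) * N + m" using assms(1) by linarith
  have "(a - 1) * N + m \<le> (a - 1) * N + N" using assms by simp
  also have "\<dots> = a * N" using assms by (cases a) auto
  also have "\<dots> \<le> d * N" using assms by simp
  finally show "(a - 1) * N + m \<le> d * N" .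
qed

lemma decomp:
  assumes "1 \<le> z" "z \<le> d * N"
  shows "z = (blk N z - 1) * N + pos N z" "1 \<le> pos N z" "pos N z \<le> N" "1 \<le> blk N z" "blk N z \<le> d"
proof -
  have N0: "N > 0" using assms by (cases N) auto
  show "z = (blk N z - 1) * N + pos N z" unfolding blk_def pos_def
    using assms(1) by (simp add: div_mult_mod_eq)
  show "1 \<le> pos N z" unfolding pos_def by simp
  show "pos N z \<le> N" unfolding pos_def using N0 by (simp add: Suc_leI)
  show "1 \<le> blk N z" unfolding blk_def by simp
  have "(z - 1) div N < d" using assms N0 by (simp add: less_mult_imp_div_less)
  then show "blk N z \<le> d" unfolding blk_def by simp
qed



lemma sum_1N: "(\<Sum>k=1..N. g k) = (\<Sum>l<N. g (Suc l))"
  using sum.atLeast1_atMost_eq[of g N] by simp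

context
  fixes d N i j :: nat and p :: "nat \<Rightarrow> real" and E :: "nat \<Rightarrow> real"
  assumes N1: "N \<ge> 1" and ii: "1 \<le> i" "i \<le> d" and jj: "1 \<le> j" "j \<le> d" and ij: "i \<noteq> j"
begin

definition FF :: "nat \<Rightarrow> nat \<Rightarrow> nat \<Rightarrow> real" where
  "FF k l z = (if 1 \<le> z \<and> z \<le> d * N \<and> blk N z = i then
       p j / N + (p i / N - p j / N) * (if pos N z \<le> l then ff (Suc k) (pos N z) else ff k (pos N z))
     else if 1 \<le> z \<and> z \<le> d * N \<and> blk N z = j then
       p j / N + (p i / N - p j / N) * (if pos N z \<le> k then ff (pos N z) N
                                        else if pos N z = Suc k then ff (Suc k) l else 0)
     else tensor_unif d N p z)"

lemma Xf:
  assumes "1 \<le> m" "m \<le> N"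
  shows "1 \<le> (i - 1) * N + m" "(i - 1) * N + m \<le> d * N" "blk N ((i - 1) * N + m) = i"
        "pos N ((i - 1) * N + m) = m"
  using idx[OF assms ii(1)] idx_inr[OF assms ii] by auto

lemma Yf:
  assumes "1 \<le> m" "m \<le> N"
  shows "1 \<le> (j - 1) * N + m" "(j - 1) * N + m \<le> d * N" "blk N ((j - 1) * N + m) = j"
        "pos N ((j - 1) * N + m) = m"
  using idx[OF assms jj(1)] idx_inr[OF assms jj] by auto

lemma Gam:
  assumes "1 \<le> z" "z \<le> d * N"
  shows "joint_gibbs 0 E d N z = 1 / real d / real N"
proof -
  have "d > 0" using ii by simp
  then show ?thesis using assms unfolding joint_gibbs_def tensor_unif_def by (simp add: gibbs0)
qed

lemma Gam_pos: "1 / real d / real N > 0"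
  using ii N1 by simp

lemma step:
  assumes k: "k < N" and l: "l < N"
  shows "therm2 (joint_gibbs 0 E d N) ((j - 1) * N + Suc k) ((i - 1) * N + Suc l) (FF k l) = FF k (Suc l)"
proof -
  define x where "x = (j - 1) * N + Suc k"
  define y where "y = (i - 1) * N + Suc l"
  have x: "1 \<le> x" "x \<le> d * N" "blk N x = j" "pos N x = Suc k"
    using Yf[of "Suc k"] k unfolding x_def by auto
  have y: "1 \<le> y" "y \<le> d * N" "blk N y = i" "pos N y = Suc l"
    using Xf[of "Suc l"] l unfolding y_def by auto
  have ne: "x \<noteq> y" using x(3) y(3) ij by auto
  have T: "therm2 (joint_gibbs 0 E d N) x y (FF k l) = avg x y (FF k l)"
    by (rule therm2_avg) (use x y Gam Gam_pos ne in auto)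
  have Fx: "FF k l x = p j / N + (p i / N - p j / N) * ff (Suc k) l"
    unfolding FF_def using x ij by auto
  have Fy: "FF k l y = p j / N + (p i / N - p j / N) * ff k (Suc l)"
    unfolding FF_def using y by auto
  have Fx': "FF k (Suc l) x = p j / N + (p i / N - p j / N) * ff (Suc k) (Suc l)"
    unfolding FF_def using x ij by auto
  have Fy': "FF k (Suc l) y = p j / N + (p i / N - p j / N) * ff (Suc k) (Suc l)"
    unfolding FF_def using y by auto
  have mid: "(FF k l x + FF k l y) / 2 = p j / N + (p i / N - p j / N) * ff (Suc k) (Suc l)"
  proof -
    have g: "\<And>a b u v :: real. (b + (a - b) * u + (b + (a - b) * v)) / 2 = b + (a - b) * ((u + v) / 2)"
      by algebra
    show ?thesis unfolding Fx Fy ff.simps(3) by (rule g)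
  qed
  have "avg x y (FF k l) = FF k (Suc l)"
  proof (rule ext)
    fix z
    show "avg x y (FF k l) z = FF k (Suc l) z"
    proof (cases "z = x \<or> z = y")
      case True
      then show ?thesis unfolding avg_def using mid Fx' Fy' by auto
    next
      case False
      then have zx: "z \<noteq> x" and zy: "z \<noteq> y" by auto
      have "FF k l z = FF k (Suc l) z"
      proof (cases "1 \<le> z \<and> z \<le> d * N")
        case True
        note dz = decomp[OF conjunct1[OF True] conjunct2[OF True]]
        have c1: "blk N z = i \<Longrightarrow> pos N z \<noteq> Suc l"
        proof
          assume "blk N z = i" "pos N z = Suc l"
          then have "z = y" using dz(1) unfolding y_def by simp
          then show False using zy by simp
        qed
        have c2: "blk N z = j \<Longrightarrow> pos N z \<noteq> Suc k"
        proof
          assume "blk N z = j" "pos N z = Suc k"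
          then have "z = x" using dz(1) unfolding x_def by simp
          then show False using zx by simp
        qed
        show ?thesis unfolding FF_def using c1 c2 True by auto
      next
        case False
        then show ?thesis unfolding FF_def by auto
      qed
      then show ?thesis unfolding avg_def using zx zy by simp
    qed
  qed
  then show ?thesis using T unfolding x_def y_def by simp
qed


lemma round_partial:
  assumes k: "k < N"
  shows "m \<le> N \<Longrightarrow> foldl (\<lambda>R l. therm2 (joint_gibbs 0 E d N) ((j - 1) * N + Suc k) ((i - 1) * N + l) R)
           (FF k 0) [1..<Suc m] = FF k m"
proof (induction m)
  case 0
  then show ?case by simp
next
  case (Suc m)
  have "[1..<Suc (Suc m)] = [1..<Suc m] @ [Suc m]" by simp
  then show ?case using Suc step[OF k, of m] by simp
qed

lemma FF_shift:
  assumes k: "k < N"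
  shows "FF k N = FF (Suc k) 0"
proof (rule ext)
  fix z
  show "FF k N z = FF (Suc k) 0 z"
  proof (cases "1 \<le> z \<and> z \<le> d * N")
    case True
    note dz = decomp[OF conjunct1[OF True] conjunct2[OF True]]
    show ?thesis unfolding FF_def using dz(2,3) True by (auto simp: le_Suc_eq)
  next
    case False
    then show ?thesis unfolding FF_def by auto
  qed
qed

lemma FF_init: "FF 0 0 = tensor_unif d N p"
proof (rule ext)
  fix z
  show "FF 0 0 z = tensor_unif d N p z"
  proof (cases "1 \<le> z \<and> z \<le> d * N")
    case True
    have ps: "pos N z = Suc ((z - 1) mod N)" unfolding pos_def by simp
    have tu: "tensor_unif d N p z = p (blk N z) / N"
      unfolding tensor_unif_def blk_def using True by simp
    show ?thesis unfolding FF_def tu using True ps by auto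
  next
    case False
    then show ?thesis unfolding FF_def by auto
  qed
qed

lemma trunc_partial:
  "m \<le> N \<Longrightarrow> foldl (\<lambda>R k. round_ij (joint_gibbs 0 E d N) N i j k R) (tensor_unif d N p) [1..<Suc m] = FF m 0"
proof (induction m)
  case 0
  then show ?case by (simp add: FF_init)
next
  case (Suc m)
  have "[1..<Suc (Suc m)] = [1..<Suc m] @ [Suc m]" by simp
  moreover have "round_ij (joint_gibbs 0 E d N) N i j (Suc m) (FF m 0) = FF (Suc m) 0"
  proof -
    have "round_ij (joint_gibbs 0 E d N) N i j (Suc m) (FF m 0) = FF m N"
      unfolding round_ij_def using round_partial[of m N] Suc.prems by simp
    also have "\<dots> = FF (Suc m) 0" using FF_shift[of m] Suc.prems by simp
    finally show ?thesis .
  qed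
  ultimately show ?case using Suc by simp
qed

lemma marg:
  assumes a: "1 \<le> a" "a \<le> d"
  shows "marginal N (FF N 0) a = swap_vec i j p a + cc N * (p a - swap_vec i j p a)"
proof -
  have vals: "\<And>l. l < N \<Longrightarrow> FF N 0 ((a - 1) * N + Suc l) =
      (if a = i then p j / N + (p i / N - p j / N) * ff N (Suc l)
       else if a = j then p j / N + (p i / N - p j / N) * (1 - ff N (Suc l))
       else p a / N)"
  proof -
    fix l assume l: "l < N"
    have b: "blk N ((a - 1) * N + Suc l) = a" "pos N ((a - 1) * N + Suc l) = Suc l"
      using idx[of "Suc l" N a] l a by auto
    have r: "1 \<le> (a - 1) * N + Suc l" "(a - 1) * N + Suc l \<le> d * N"
      using idx_inr[of "Suc l" N a d] l a by auto
    have sym: "ff (Suc l) N = 1 - ff N (Suc l)" using ff_sym[of "Suc l" N] by simp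
    have tu: "tensor_unif d N p ((a - 1) * N + Suc l) = p a / N"
      using b r unfolding tensor_unif_def blk_def by simp
    show "FF N 0 ((a - 1) * N + Suc l) =
      (if a = i then p j / N + (p i / N - p j / N) * ff N (Suc l)
       else if a = j then p j / N + (p i / N - p j / N) * (1 - ff N (Suc l))
       else p a / N)"
      unfolding FF_def using b r sym tu l ij by auto
  qed
  have M: "marginal N (FF N 0) a = (\<Sum>l<N. FF N 0 ((a - 1) * N + Suc l))"
    unfolding marginal_def by (rule sum_1N)
  have SSc: "(\<Sum>l<N. ff N (Suc l)) = real N * cc N" using SS_closed[of N] unfolding SS_def .
  have Npos: "real N > 0" using N1 by simp
  consider "a = i" | "a = j" | "a \<noteq> i \<and> a \<noteq> j" by blast
  then show ?thesis
  proof cases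
    case 1
    have "marginal N (FF N 0) a = (\<Sum>l<N. p j / N + (p i / N - p j / N) * ff N (Suc l))"
      unfolding M using vals 1 by (intro sum.cong) auto
    also have "\<dots> = real N * (p j / N) + (p i / N - p j / N) * (real N * cc N)"
      by (simp add: sum.distrib sum_distrib_left[symmetric] SSc)
    also have "\<dots> = p j + cc N * (p i - p j)" using Npos by (simp add: field_simps)
    finally show ?thesis using 1 unfolding swap_vec_def by simp
  next
    case 2
    have "marginal N (FF N 0) a = (\<Sum>l<N. p j / N + (p i / N - p j / N) * (1 - ff N (Suc l)))"
      unfolding M using vals 2 ij by (intro sum.cong) auto
    also have "\<dots> = real N * (p j / N) + (p i / N - p j / N) * (real N - real N * cc N)"
      by (simp add: sum.distrib sum_distrib_left[symmetric] sum_subtractf SSc)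
    also have "\<dots> = p i + cc N * (p j - p i)" using Npos by (simp add: field_simps)
    finally show ?thesis using 2 ij unfolding swap_vec_def by simp
  next
    case 3
    have "marginal N (FF N 0) a = (\<Sum>l<N. p a / N)"
      unfolding M using vals 3 by (intro sum.cong) auto
    also have "\<dots> = p a" using Npos by simp
    finally show ?thesis using 3 unfolding swap_vec_def by simp
  qed
qed

lemma main_eq:
  "protocol (joint_gibbs 0 E d N) d N i j (tensor_unif d N p)
     = tensor_unif d N (\<lambda>a. swap_vec i j p a + cc N * (p a - swap_vec i j p a))"
proof -
  have T: "trunc_protocol (joint_gibbs 0 E d N) N i j (tensor_unif d N p) = FF N 0"
    unfolding trunc_protocol_def using trunc_partial[of N] by simp
  show ?thesis unfolding protocol_def mem_therm_def T
  proof (rule ext)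
    fix x
    show "tensor_unif d N (marginal N (FF N 0)) x =
          tensor_unif d N (\<lambda>a. swap_vec i j p a + cc N * (p a - swap_vec i j p a)) x"
    proof (cases "1 \<le> x \<and> x \<le> d * N")
      case True
      note dz = decomp[OF conjunct1[OF True] conjunct2[OF True]]
      have "marginal N (FF N 0) (blk N x) = swap_vec i j p (blk N x) + cc N * (p (blk N x) - swap_vec i j p (blk N x))"
        by (rule marg) (use dz in auto)
      then show ?thesis unfolding tensor_unif_def blk_def using True by simp
    next
      case False
      then show ?thesis unfolding tensor_unif_def by auto
    qed
  qed
qed

end


theorem lemma1:
  shows "\<exists>\<epsilon> :: nat \<Rightarrow> real.
     (\<forall>(d::nat) (N::nat) (E::nat \<Rightarrow> real) p i j.
        d \<ge> 2 \<longrightarrow> N \<ge> 1 \<longrightarrow> prob_vec d p \<longrightarrow>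
        i \<in> {1..d} \<longrightarrow> j \<in> {1..d} \<longrightarrow> i \<noteq> j \<longrightarrow>
        protocol (joint_gibbs 0 E d N) d N i j (tensor_unif d N p)
          = tensor_unif d N (\<lambda>a. swap_vec i j p a + \<epsilon> N * (p a - swap_vec i j p a)))
   \<and> (\<lambda>N. \<epsilon> N - 1 / sqrt (pi * real N)) \<in> o(\<lambda>N. 1 / sqrt (real N))"
proof (intro exI[of _ cc] conjI allI impI)
  fix d N :: nat and E :: "nat \<Rightarrow> real" and p :: "nat \<Rightarrow> real" and i j :: nat
  assume "d \<ge> 2" "N \<ge> 1" "prob_vec d p" "i \<in> {1..d}" "j \<in> {1..d}" "i \<noteq> j"
  then show "protocol (joint_gibbs 0 E d N) d N i j (tensor_unif d N p)
          = tensor_unif d N (\<lambda>a. swap_vec i j p a + cc N * (p a - swap_vec i j p a))"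
    using main_eq[of N i d j E p] by auto
next
  show "(\<lambda>N. cc N - 1 / sqrt (pi * real N)) \<in> o(\<lambda>N. 1 / sqrt (real N))"
    by (rule cc_asymp)
qed

end
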